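(* Let $g\in\mathbb{Z}^+$, let $\mathcal{H}$ be a hierarchical generator with lineage $\mathcal{L}$ and $\mathrm{gap}(\mathcal{H})\le g$, and let $\varphi\in\mathcal{H}$. Then the family $\mathfrak{R}_g(\mathcal{H},\varphi)$ of all hierarchical generators $\mathcal{H}_*$ whose lineage $\mathcal{L}_*$ satisfies $\mathcal{L}\cup\{\varphi\}\subset\mathcal{L}_*$ and $\mathrm{gap}(\mathcal{H}_* )\le g$ has a least element $\bar{\mathcal{H}}$, i.e. its lineage $\bar{\mathcal{L}}$ is contained in the lineage of every member of the family. Moreover, for every $\psi\in(\bar{\mathcal{L}}\setminus\mathcal{L})\setminus\{\varphi\}$ there is an integer $k$ with $1\le k\le\lfloor\ell_\varphi/g\rfloor$ and $\psi\in\mathcal{O}^k(\varphi,-g,\mathfrak{B})$.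
   Context: Fix integers $d\ge1$, $n\ge2$, $m\ge2$; $s=n-1$, $p=m-1$. B-splines $\varphi^\ell_{\vec i}(\vec x)=\prod_kQ(n^\ell x_k-i_k)$ for $\ell\ge0$, $\vec i\in\mathbb{Z}^d$, $Q$ the uniform B-spline of order $m$ with knots $0,\dots,m$; $\mathfrak{B}$ the set of all of them, $\ell_\varphi$ the level; $\mathcal{B}^0=\{\varphi^0_{\vec i}:\vec i\in[-p:0]^d\}$. Children $\mathrm{ch}(\varphi^\ell_{\vec i})=\{\varphi^{\ell+1}_{\vec k}:n\vec i\le\vec k\le n\vec i+sm\}$, extended to sets by union. Cells $I^\ell_{\vec i}=\prod_k[i_kn^{-\ell},(i_k+1)n^{-\ell})$, cell children $\mathrm{ch}(I^\ell_{\vec i})=\{I^{\ell+1}_{\vec k}:n\vec i\le\vec k\le n\vec i+s\}$, $\mathrm{ch}^k$ iterated, $\mathrm{ch}^{-k}(I)=\{J:I\in\mathrm{ch}^k(J)\}$. $\mathbb{I}(\varphi^\ell_{\vec i})=\{I^\ell_{\vec k}:\vec i\le\vec k\le\vec i+p\}$, $\mathbb{I}^k(\varphi)=\mathrm{ch}^k(\mathbb{I}(\varphi))$ ($k\in\mathbb{Z}$), $\mathbb{B}^k(I)=\{\varphi\in\mathfrak{B}:I\in\mathbb{I}^{-k}(\varphi)\}$, extended to sets by union. $\mathcal{O}(\mathcal{F},j,\mathcal{H})=\mathbb{B}^j(\mathbb{I}(\mathcal{F}))\cap\mathcal{H}$, $\mathcal{O}(\varphi,j,\mathcal{H})=\mathcal{O}(\{\varphi\},j,\mathcal{H})$,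 $\mathcal{O}^{k+1}(\mathcal{F},j,\mathcal{H})=\mathcal{O}(\mathcal{O}^k(\mathcal{F},j,\mathcal{H}),j,\mathcal{H})$, $\mathcal{O}^1=\mathcal{O}$. A lineage is a finite $\mathcal{L}\subset\mathfrak{B}$ with $\mathcal{L}\subset\mathcal{B}^0\cup\mathrm{ch}(\mathcal{L})$; its hierarchical generator is $(\mathcal{B}^0\cup\mathrm{ch}(\mathcal{L}))\setminus\mathcal{L}$ (the lineage is determined by the generator). $\mathrm{gap}_{\mathcal{H}}(\varphi)=\sup\{g\in\mathbb{Z}:\mathcal{O}(\varphi,-g,\mathcal{H})\neq\emptyset\}$ for $\varphi\in\mathcal{H}$, and $\mathrm{gap}(\mathcal{H})=\max_{\varphi\in\mathcal{H}}\mathrm{gap}_{\mathcal{H}}(\varphi)$. *)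

theory Defs
  imports Main
begin

text \<open>A B-spline phi^l_i (resp. a cell I^l_i) is represented by the pair (l, i),
  with l :: nat the level and i :: int list the index vector of length d.\<close>

type_synonym bspl = "nat \<times> int list"
type_synonym cell = "nat \<times> int list"

definition lev :: "bspl \<Rightarrow> nat" where "lev phi = fst phi"

definition allB :: "nat \<Rightarrow> bspl set" where
  "allB d = {(l, i). length i = d}"

definition B0 :: "nat \<Rightarrow> nat \<Rightarrow> bspl set" where
  "B0 d m = {(0, i) | i. length i = d \<and> (\<forall>j<d. - (int m - 1) \<le> i ! j \<and> i ! j \<le> 0)}"

definition chB :: "nat \<Rightarrow> nat \<Rightarrow> bspl \<Rightarrow> bspl set" where
  "chB n m phi = {(Suc (fst phi), k) | k. length k = length (snd phi) \<and>
     (\<forall>j<length k. int n * snd phi ! j \<le> k ! j \<and>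
                    k ! j \<le> int n * snd phi ! j + (int n - 1) * int m)}"

definition chBs :: "nat \<Rightarrow> nat \<Rightarrow> bspl set \<Rightarrow> bspl set" where
  "chBs n m L = (\<Union>phi\<in>L. chB n m phi)"

definition chC :: "nat \<Rightarrow> cell \<Rightarrow> cell set" where
  "chC n I = {(Suc (fst I), k) | k. length k = length (snd I) \<and>
     (\<forall>j<length k. int n * snd I ! j \<le> k ! j \<and> k ! j \<le> int n * snd I ! j + (int n - 1))}"

definition chCs :: "nat \<Rightarrow> cell set \<Rightarrow> cell set" where
  "chCs n S = (\<Union>I\<in>S. chC n I)"

definition chZ :: "nat \<Rightarrow> int \<Rightarrow> cell set \<Rightarrow> cell set" where
  "chZ n k S = (if 0 \<le> k then (chCs n ^^ nat k) S
               else (\<Union>I\<in>S. {J. I \<in> (chCs n ^^ nat (- k)) {J}}))"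

definition suppC :: "nat \<Rightarrow> bspl \<Rightarrow> cell set" where
  "suppC m phi = {(fst phi, k) | k. length k = length (snd phi) \<and>
     (\<forall>j<length k. snd phi ! j \<le> k ! j \<and> k ! j \<le> snd phi ! j + (int m - 1))}"

definition suppCs :: "nat \<Rightarrow> bspl set \<Rightarrow> cell set" where
  "suppCs m F = (\<Union>phi\<in>F. suppC m phi)"

definition suppCk :: "nat \<Rightarrow> nat \<Rightarrow> int \<Rightarrow> bspl \<Rightarrow> cell set" where
  "suppCk n m k phi = chZ n k (suppC m phi)"

definition BBk :: "nat \<Rightarrow> nat \<Rightarrow> nat \<Rightarrow> int \<Rightarrow> cell \<Rightarrow> bspl set" where
  "BBk d n m k I = {phi \<in> allB d. I \<in> suppCk n m (- k) phi}"

definition BBks :: "nat \<Rightarrow> nat \<Rightarrow> nat \<Rightarrow> int \<Rightarrow> cell set \<Rightarrow> bspl set" where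
  "BBks d n m k S = (\<Union>I\<in>S. BBk d n m k I)"

definition Ov :: "nat \<Rightarrow> nat \<Rightarrow> nat \<Rightarrow> bspl set \<Rightarrow> int \<Rightarrow> bspl set \<Rightarrow> bspl set" where
  "Ov d n m F j H = BBks d n m j (suppCs m F) \<inter> H"

definition Ovpow :: "nat \<Rightarrow> nat \<Rightarrow> nat \<Rightarrow> nat \<Rightarrow> bspl set \<Rightarrow> int \<Rightarrow> bspl set \<Rightarrow> bspl set" where
  "Ovpow d n m k F j H = ((\<lambda>S. Ov d n m S j H) ^^ k) F"

definition lineage :: "nat \<Rightarrow> nat \<Rightarrow> nat \<Rightarrow> bspl set \<Rightarrow> bool" where
  "lineage d n m L \<longleftrightarrow> finite L \<and> L \<subseteq> allB d \<and> L \<subseteq> B0 d m \<union> chBs n m L"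

definition hgen :: "nat \<Rightarrow> nat \<Rightarrow> nat \<Rightarrow> bspl set \<Rightarrow> bspl set" where
  "hgen d n m L = (B0 d m \<union> chBs n m L) - L"

definition gapAt :: "nat \<Rightarrow> nat \<Rightarrow> nat \<Rightarrow> bspl set \<Rightarrow> bspl \<Rightarrow> int" where
  "gapAt d n m H phi = Sup {g :: int. Ov d n m {phi} (- g) H \<noteq> {}}"

definition gap :: "nat \<Rightarrow> nat \<Rightarrow> nat \<Rightarrow> bspl set \<Rightarrow> int" where
  "gap d n m H = Max (gapAt d n m H ` H)"

end

theory Submission
  imports Defs
begin

lemma l4: "0 < (k::int) \<Longrightarrow> k*(x div k) \<le> x \<and> x \<le> k*(x div k) + k - 1"
proof -
  assume k: "0 < k"
  have e: "k*(x div k) + x mod k = x" by (metis div_mult_mod_eq mult.commute)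
  have "0 \<le> x mod k" "x mod k < k" using k by auto
  thus ?thesis using e by linarith
qed

lemma l4a: "0 < (k::int) \<Longrightarrow> k*(x div k) \<le> x" using l4 by blast
lemma l4b: "0 < (k::int) \<Longrightarrow> x \<le> k*(x div k) + (k - 1)" using l4[of k x] by linarith

lemma l2: "0 < (k::int) \<Longrightarrow> k*a \<le> x \<Longrightarrow> a \<le> x div k"
  using zdiv_mono1 by fastforce

lemma l3: "0 < (k::int) \<Longrightarrow> x \<le> k*b + k - 1 \<Longrightarrow> x div k \<le> b"
proof (rule ccontr)
  assume k: "0 < k" and x: "x \<le> k*b + k - 1" and "\<not> x div k \<le> b"
  hence "b + 1 \<le> x div k" by simp
  hence "k*(b+1) \<le> k*(x div k)" using k by (simp add: mult_left_mono)
  thus False using l4[OF k, of x] x by (simp add: algebra_simps)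
qed

lemma l1: "0 < (k::int) \<Longrightarrow> k*e \<le> c \<Longrightarrow> c \<le> k*e + k - 1 \<Longrightarrow> c div k = e"
  using l2 l3 by (meson antisym)

definition ov :: "nat \<Rightarrow> nat \<Rightarrow> nat \<Rightarrow> bspl \<Rightarrow> bspl \<Rightarrow> bool" where
  "ov n m j eta psi \<longleftrightarrow> (\<exists>I\<in>suppC m eta. I \<in> (chCs n ^^ j) (suppC m psi))"

lemma chCs_mono: "A \<subseteq> B \<Longrightarrow> chCs n A \<subseteq> chCs n B"
  unfolding chCs_def by blast

lemma chCs_mem: "J \<in> chCs n S \<longleftrightarrow> (\<exists>K\<in>S. J \<in> chC n K)"
  by (simp add: chCs_def)

lemma chCs_pow_mono: "A \<subseteq> B \<Longrightarrow> (chCs n ^^ j) A \<subseteq> (chCs n ^^ j) B"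
  by (induction j) (simp_all add: chCs_mono)

lemma chCs_pow_level: "J \<in> (chCs n ^^ j) S \<Longrightarrow> \<exists>I\<in>S. fst J = fst I + j"
proof (induction j arbitrary: J)
  case 0 thus ?case by auto
next
  case (Suc j)
  then obtain K where K1: "K \<in> (chCs n ^^ j) S" and K2: "J \<in> chC n K"
    by (auto simp only: funpow.simps comp_apply chCs_mem)
  have "fst J = Suc (fst K)" using K2 by (auto simp: chC_def)
  moreover obtain I where "I\<in>S" "fst K = fst I + j" using Suc.IH[OF K1] by blast
  ultimately show ?case by auto
qed

lemma suppC_level: "I \<in> suppC m phi \<Longrightarrow> fst I = fst phi"
  by (auto simp: suppC_def)

lemma ov_level: "ov n m j eta psi \<Longrightarrow> lev eta = lev psi + j"
  unfolding ov_def lev_def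
  by (metis chCs_pow_level suppC_level)

lemma self_suppC: "m \<ge> 1 \<Longrightarrow> phi \<in> suppC m phi"
  unfolding suppC_def by (cases phi) auto

lemma Ov_iff: "psi \<in> Ov d n m F (- int j) X \<longleftrightarrow> psi \<in> allB d \<and> psi \<in> X \<and> (\<exists>chi\<in>F. ov n m j chi psi)"
  unfolding Ov_def BBks_def BBk_def suppCk_def chZ_def suppCs_def ov_def by auto

lemma Ov_mono: "F \<subseteq> F' \<Longrightarrow> X \<subseteq> Y \<Longrightarrow> Ov d n m F j X \<subseteq> Ov d n m F' j Y"
  unfolding Ov_def BBks_def suppCs_def by blast

lemma Ovpow_mono: "X \<subseteq> Y \<Longrightarrow> Ovpow d n m k F j X \<subseteq> Ovpow d n m k F j Y"
proof (induction k)
  case 0 thus ?case by (simp add: Ovpow_def)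
next
  case (Suc k)
  thus ?case unfolding Ovpow_def by (simp add: Ov_mono)
qed

lemma Ovpow_0: "Ovpow d n m 0 F j X = F" by (simp add: Ovpow_def)
lemma Ovpow_Suc: "Ovpow d n m (Suc k) F j X = Ov d n m (Ovpow d n m k F j X) j X"
  by (simp add: Ovpow_def)

lemma Ovpow_level: "psi \<in> Ovpow d n m k {phi} (- int j) X \<Longrightarrow> lev phi = lev psi + k * j"
proof (induction k arbitrary: psi)
  case 0 thus ?case by (simp add: Ovpow_0)
next
  case (Suc k)
  then obtain chi where "chi \<in> Ovpow d n m k {phi} (- int j) X" "ov n m j chi psi"
    by (auto simp: Ovpow_Suc Ov_iff)
  then show ?case using Suc.IH ov_level by fastforce
qed

lemma Ovpow_sub: "phi \<in> X \<Longrightarrow> Ovpow d n m k {phi} j X \<subseteq> X"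
  by (cases k) (auto simp: Ovpow_0 Ovpow_Suc Ov_def)

lemma supp_child:
  assumes n1: "n \<ge> 1" and e: "eta \<in> chB n m chi" and J: "J \<in> suppC m eta"
  shows "\<exists>I\<in>suppC m chi. J \<in> chC n I"
proof -
  obtain l i where chi: "chi = (l, i)" by (cases chi)
  obtain k where eta: "eta = (Suc l, k)" and lk: "length k = length i"
    and kb: "\<forall>j<length k. int n * i ! j \<le> k ! j \<and> k ! j \<le> int n * i ! j + (int n - 1) * int m"
    using e chi by (auto simp: chB_def)
  obtain c where J': "J = (Suc l, c)" and lc: "length c = length k"
    and cb: "\<forall>j<length c. k ! j \<le> c ! j \<and> c ! j \<le> k ! j + (int m - 1)"
    using J eta by (auto simp: suppC_def)
  have np: "0 < int n" using n1 by simp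
  define e where "e = map (\<lambda>x. x div int n) c"
  have "(l, e) \<in> suppC m chi"
    unfolding suppC_def chi
  proof (clarsimp, intro conjI allI impI)
    show "length e = length i" using lc lk by (simp add: e_def)
    fix j assume "j < length e"
    hence j: "j < length c" by (simp add: e_def)
    have ej: "e ! j = c ! j div int n" using j by (simp add: e_def)
    have "int n * i ! j \<le> c ! j" using kb cb j lc by fastforce
    thus "i ! j \<le> e ! j" using l2[OF np] ej by simp
    have "c ! j \<le> int n * i ! j + (int n - 1) * int m + (int m - 1)" using kb cb j lc by fastforce
    also have "\<dots> = int n * (i ! j + (int m - 1)) + int n - 1" by (simp add: algebra_simps)
    finally show "e ! j \<le> i ! j + (int m - 1)" using l3[OF np] ej by simp
  qed
  moreover have "J \<in> chC n (l, e)"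
    unfolding chC_def J' using lc lk by (auto simp: e_def l4a[OF np] l4b[OF np])
  ultimately show ?thesis by blast
qed

lemma chC_unique:
  assumes n1: "n \<ge> 1" and a: "J \<in> chC n I" and b: "J \<in> chC n I'"
  shows "I = I'"
proof -
  have np: "0 < int n" using n1 by simp
  have f: "fst I = fst I'" using a b by (auto simp: chC_def)
  have len: "length (snd I) = length (snd I')" using a b by (auto simp: chC_def)
  have "snd I = snd I'"
  proof (rule nth_equalityI)
    show "length (snd I) = length (snd I')" by (fact len)
    fix j assume j: "j < length (snd I)"
    have "snd J ! j div int n = snd I ! j" using a j l1[OF np] by (auto simp: chC_def)
    moreover have "snd J ! j div int n = snd I' ! j" using b j len l1[OF np] by (auto simp: chC_def)
    ultimately show "snd I ! j = snd I' ! j" by simp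
  qed
  with f show ?thesis by (simp add: prod_eq_iff)
qed

lemma suppC_child_sub: "n \<ge> 1 \<Longrightarrow> eta \<in> chB n m chi \<Longrightarrow> suppC m eta \<subseteq> chCs n (suppC m chi)"
proof
  fix J assume "n \<ge> 1" "eta \<in> chB n m chi" "J \<in> suppC m eta"
  then obtain I where "I\<in>suppC m chi" "J \<in> chC n I" using supp_child by blast
  thus "J \<in> chCs n (suppC m chi)" by (auto simp only: chCs_mem)
qed

lemma ov_down:
  assumes n1: "n \<ge> 1" and o: "ov n m (Suc j) eta psi" and e: "eta \<in> chB n m chi"
  shows "ov n m j chi psi"
proof -
  obtain I where I1: "I \<in> suppC m eta" and I2: "I \<in> chCs n ((chCs n ^^ j) (suppC m psi))"
    using o by (auto simp: ov_def)
  obtain K where K: "K \<in> (chCs n ^^ j) (suppC m psi)" "I \<in> chC n K" using I2 by (auto simp only: chCs_mem)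
  obtain I0 where I0: "I0 \<in> suppC m chi" "I \<in> chC n I0" using supp_child[OF n1 e I1] by blast
  have "I0 = K" using chC_unique[OF n1 I0(2) K(2)] .
  thus ?thesis using I0 K unfolding ov_def by blast
qed

lemma ov_up:
  assumes n1: "n \<ge> 1" and o: "ov n m j eta psi" and p: "psi \<in> chB n m chi"
  shows "ov n m (Suc j) eta chi"
proof -
  have "(chCs n ^^ j) (suppC m psi) \<subseteq> (chCs n ^^ j) (chCs n (suppC m chi))"
    by (rule chCs_pow_mono[OF suppC_child_sub[OF n1 p]])
  also have "\<dots> = (chCs n ^^ Suc j) (suppC m chi)" by (simp add: funpow_swap1)
  finally show ?thesis using o unfolding ov_def by blast
qed

lemma cover:
  assumes n1: "n \<ge> 1" and m1: "m \<ge> 1" and I: "I \<in> suppC m chi" and I': "I' \<in> chC n I"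
  shows "\<exists>eta\<in>chB n m chi. I' \<in> suppC m eta"
proof -
  obtain l i where chi: "chi = (l, i)" by (cases chi)
  obtain e where Ie: "I = (l, e)" and le: "length e = length i"
    and eb: "\<forall>j<length e. i ! j \<le> e ! j \<and> e ! j \<le> i ! j + (int m - 1)"
    using I chi by (auto simp: suppC_def)
  obtain c where Ic: "I' = (Suc l, c)" and lc: "length c = length e"
    and cb: "\<forall>j<length c. int n * e ! j \<le> c ! j \<and> c ! j \<le> int n * e ! j + (int n - 1)"
    using I' Ie by (auto simp: chC_def)
  define k where "k = map (\<lambda>j. max (int n * i ! j) (c ! j - (int m - 1))) [0..<length i]"
  have lk: "length k = length i" by (simp add: k_def)
  have "(Suc l, k) \<in> chB n m chi"
    unfolding chB_def chi
  proof (clarsimp, intro conjI allI impI)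
    show "length k = length i" by (fact lk)
    fix j assume j: "j < length k"
    hence ji: "j < length i" using lk by simp
    have kj: "k ! j = max (int n * i ! j) (c ! j - (int m - 1))" using ji by (simp add: k_def)
    show "int n * i ! j \<le> k ! j" using kj by simp
    have "e ! j \<le> i ! j + (int m - 1)" using eb ji le by auto
    hence "int n * e ! j \<le> int n * (i ! j + (int m - 1))" by (simp add: mult_left_mono)
    moreover have "c ! j \<le> int n * e ! j + (int n - 1)" using cb ji le lc by auto
    ultimately have "c ! j \<le> int n * (i ! j + (int m - 1)) + (int n - 1)" by linarith
    hence "c ! j - (int m - 1) \<le> int n * i ! j + (int n - 1) * int m" by (simp add: algebra_simps)
    moreover have "int n * i ! j \<le> int n * i ! j + (int n - 1) * int m" using n1 by simp
    ultimately show "k ! j \<le> int n * i ! j + (int n - 1) * int m" using kj by simp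
  qed
  moreover have "I' \<in> suppC m (Suc l, k)"
    unfolding suppC_def Ic
  proof (clarsimp, intro conjI allI impI)
    show "length c = length k" using lk lc le by simp
    fix j assume j: "j < length c"
    hence ji: "j < length i" using lc le by simp
    have kj: "k ! j = max (int n * i ! j) (c ! j - (int m - 1))" using ji by (simp add: k_def)
    have "i ! j \<le> e ! j" using eb ji le by auto
    hence "int n * i ! j \<le> int n * e ! j" by (simp add: mult_left_mono)
    moreover have "int n * e ! j \<le> c ! j" using cb j by auto
    ultimately have "int n * i ! j \<le> c ! j" by linarith
    thus "k ! j \<le> c ! j" using kj m1 by simp
    show "c ! j \<le> k ! j + (int m - 1)" using kj m1 by simp
  qed
  ultimately show ?thesis by blast
qed

lemma child_cell_ex: "n \<ge> 1 \<Longrightarrow> (Suc (fst I), map (\<lambda>x. int n * x) (snd I)) \<in> chC n I"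
  unfolding chC_def by auto

lemma child_B_ex: "n \<ge> 1 \<Longrightarrow> (Suc (fst chi), map (\<lambda>x. int n * x) (snd chi)) \<in> chB n m chi"
  unfolding chB_def by auto

lemma finite_bounded_lists:
  "finite {xs :: int list. length xs = d \<and> (\<forall>j<d. a j \<le> xs ! j \<and> xs ! j \<le> b j)}"
proof -
  have "{xs :: int list. length xs = d \<and> (\<forall>j<d. a j \<le> xs ! j \<and> xs ! j \<le> b j)}
        \<subseteq> {xs. set xs \<subseteq> (\<Union>j<d. {a j..b j}) \<and> length xs = d}"
  proof -
    have "set xs \<subseteq> (\<Union>j<d. {a j..b j})" if l: "length xs = d" and h: "\<forall>j<d. a j \<le> xs ! j \<and> xs ! j \<le> b j" for xs
    proof
      fix x assume x: "x \<in> set xs"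
      then obtain j where "j < length xs" "xs ! j = x" by (auto simp: in_set_conv_nth)
      thus "x \<in> (\<Union>j<d. {a j..b j})" using h l by force
    qed
    thus ?thesis by blast
  qed
  moreover have "finite {xs. set xs \<subseteq> (\<Union>j<d. {a j..b j}) \<and> length xs = d}"
    by (rule finite_lists_length_eq) auto
  ultimately show ?thesis by (rule finite_subset)
qed

lemma B0_finite: "finite (B0 d m)"
proof -
  have "B0 d m = (\<lambda>i. (0::nat, i)) ` {xs :: int list. length xs = d \<and> (\<forall>j<d. (\<lambda>_. - (int m - 1)) j \<le> xs ! j \<and> xs ! j \<le> (\<lambda>_. 0) j)}"
    unfolding B0_def by auto
  thus ?thesis using finite_bounded_lists by simp
qed

lemma chB_finite: "finite (chB n m chi)"
proof -
  let ?d = "length (snd chi)"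
  have "chB n m chi = (\<lambda>k. (Suc (fst chi), k)) ` {xs :: int list. length xs = ?d \<and> (\<forall>j<?d. (\<lambda>j. int n * snd chi ! j) j \<le> xs ! j \<and> xs ! j \<le> (\<lambda>j. int n * snd chi ! j + (int n - 1) * int m) j)}"
    unfolding chB_def by auto
  thus ?thesis using finite_bounded_lists by simp
qed

lemma chBs_finite: "finite L \<Longrightarrow> finite (chBs n m L)"
  unfolding chBs_def using chB_finite by blast

lemma hgen_finite: "finite L \<Longrightarrow> finite (hgen d n m L)"
  unfolding hgen_def using B0_finite chBs_finite by blast

lemma chBs_allB: "L \<subseteq> allB d \<Longrightarrow> chBs n m L \<subseteq> allB d"
  unfolding chBs_def chB_def allB_def by auto

lemma B0_allB: "B0 d m \<subseteq> allB d"
  unfolding B0_def allB_def by auto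

lemma hgen_allB: "L \<subseteq> allB d \<Longrightarrow> hgen d n m L \<subseteq> allB d"
  unfolding hgen_def using B0_allB chBs_allB by blast

lemma chBs_mono: "L \<subseteq> L' \<Longrightarrow> chBs n m L \<subseteq> chBs n m L'"
  unfolding chBs_def by blast

lemma chB_lev: "eta \<in> chB n m chi \<Longrightarrow> lev eta = Suc (lev chi)"
  unfolding chB_def lev_def by auto

lemma hgen_nonempty:
  assumes n1: "n \<ge> 1" and fin: "finite L" and ne: "L \<noteq> {}"
  shows "hgen d n m L \<noteq> {}"
proof -
  define M where "M = Max (lev ` L)"
  obtain chi where chi: "chi \<in> L" "lev chi = M"
    using fin ne unfolding M_def by (metis (mono_tags, lifting) Max_in finite_imageI image_iff image_is_empty)
  define eta where "eta = (Suc (fst chi), map (\<lambda>x. int n * x) (snd chi))"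
  have e: "eta \<in> chB n m chi" using child_B_ex[OF n1] by (simp add: eta_def)
  have "eta \<notin> L"
  proof
    assume "eta \<in> L"
    hence "lev eta \<le> M" using fin unfolding M_def by simp
    thus False using chB_lev[OF e] chi by simp
  qed
  moreover have "eta \<in> chBs n m L" using e chi unfolding chBs_def by blast
  ultimately show ?thesis unfolding hgen_def by blast
qed

lemma gap_bound:
  assumes fin: "finite H" and sub: "H \<subseteq> allB d" and e: "eta \<in> H" and p: "psi \<in> H"
    and o: "ov n m j eta psi"
  shows "int j \<le> gap d n m H"
proof -
  let ?S = "{g :: int. Ov d n m {eta} (- g) H \<noteq> {}}"
  have "psi \<in> Ov d n m {eta} (- int j) H" using sub p o by (auto simp: Ov_iff)
  hence jS: "int j \<in> ?S" by auto
  have bdd: "bdd_above ?S"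
  proof (rule bdd_aboveI)
    fix x assume xS: "x \<in> ?S"
    show "x \<le> int (lev eta)"
    proof (cases "x \<le> 0")
      case True thus ?thesis by simp
    next
      case False
      from xS obtain q where "q \<in> Ov d n m {eta} (- x) H" by auto
      hence "q \<in> Ov d n m {eta} (- int (nat x)) H" using False by simp
      hence "ov n m (nat x) eta q" using Ov_iff[of q d n m "{eta}" "nat x" H] by blast
      hence "lev eta = lev q + nat x" by (rule ov_level)
      thus ?thesis using False by simp
    qed
  qed
  have "int j \<le> gapAt d n m H eta" unfolding gapAt_def by (rule cSup_upper[OF jS bdd])
  also have "\<dots> \<le> gap d n m H" unfolding gap_def using fin e by simp
  finally show ?thesis .
qed

lemma gap_le:
  assumes fin: "finite H" and ne: "H \<noteq> {}" and sub: "H \<subseteq> allB d" and m1: "m \<ge> 1"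
    and g0: "0 \<le> g"
    and key: "\<And>eta psi j. eta \<in> H \<Longrightarrow> psi \<in> H \<Longrightarrow> ov n m j eta psi \<Longrightarrow> int j \<le> g"
  shows "gap d n m H \<le> g"
  unfolding gap_def
proof (rule Max.boundedI)
  show "finite (gapAt d n m H ` H)" using fin by simp
  show "gapAt d n m H ` H \<noteq> {}" using ne by simp
  fix a assume "a \<in> gapAt d n m H ` H"
  then obtain eta where e: "eta \<in> H" and a: "a = gapAt d n m H eta" by auto
  let ?S = "{g :: int. Ov d n m {eta} (- g) H \<noteq> {}}"
  have "ov n m 0 eta eta" unfolding ov_def using self_suppC[OF m1, of eta] by (metis funpow_0)
  hence "eta \<in> Ov d n m {eta} (- int 0) H" using e sub Ov_iff[of eta d n m "{eta}" 0 H] by blast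
  hence "(0::int) \<in> ?S" by auto
  hence ne0: "?S \<noteq> {}" by blast
  have "Sup ?S \<le> g"
  proof (rule cSup_least[OF ne0])
    fix x assume xS: "x \<in> ?S"
    show "x \<le> g"
    proof (cases "x \<le> 0")
      case True thus ?thesis using g0 by simp
    next
      case False
      from xS obtain q where "q \<in> Ov d n m {eta} (- x) H" by auto
      hence "q \<in> Ov d n m {eta} (- int (nat x)) H" using False by simp
      hence "q \<in> H" "ov n m (nat x) eta q" using Ov_iff[of q d n m "{eta}" "nat x" H] by blast+
      hence "int (nat x) \<le> g" using key e by blast
      thus ?thesis using False by simp
    qed
  qed
  thus "a \<le> g" unfolding a gapAt_def .
qed

lemma descend:
  assumes lin: "lineage d n m Ls" and n1: "n \<ge> 1" and m1: "m \<ge> 1" and psi: "psi \<notin> Ls"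
  shows "\<And>chi j. Max (lev ` Ls) - lev chi = t \<Longrightarrow> chi \<in> Ls \<Longrightarrow> ov n m j chi psi
          \<Longrightarrow> \<exists>eta \<in> hgen d n m Ls. \<exists>j'>j. ov n m j' eta psi"
proof (induction t rule: less_induct)
  case (less t chi j)
  have fin: "finite Ls" using lin by (simp add: lineage_def)
  obtain I where I1: "I \<in> suppC m chi" and I2: "I \<in> (chCs n ^^ j) (suppC m psi)"
    using less.prems(3) by (auto simp: ov_def)
  define I' where "I' = (Suc (fst I), map (\<lambda>x. int n * x) (snd I))"
  have I': "I' \<in> chC n I" unfolding I'_def by (rule child_cell_ex[OF n1])
  obtain eta where e: "eta \<in> chB n m chi" and I'e: "I' \<in> suppC m eta"
    using cover[OF n1 m1 I1 I'] by blast
  have "I' \<in> chCs n ((chCs n ^^ j) (suppC m psi))" using I' I2 by (auto simp only: chCs_mem)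
  hence oe: "ov n m (Suc j) eta psi" using I'e unfolding ov_def by auto
  have eC: "eta \<in> chBs n m Ls" using e less.prems(2) unfolding chBs_def by blast
  show ?case
  proof (cases "eta \<in> Ls")
    case False
    hence "eta \<in> hgen d n m Ls" using eC unfolding hgen_def by blast
    thus ?thesis using oe by blast
  next
    case True
    have le: "lev eta \<le> Max (lev ` Ls)" using True fin by simp
    have "lev eta = Suc (lev chi)" by (rule chB_lev[OF e])
    hence lt: "Max (lev ` Ls) - lev eta < t" using le less.prems(1) by simp
    obtain eta' j' where "eta' \<in> hgen d n m Ls" "j' > Suc j" "ov n m j' eta' psi"
      using less.IH[OF lt refl True oe] by blast
    thus ?thesis by (intro bexI[of _ eta'] exI[of _ j']) auto
  qed
qed


theorem lemma8p2:
  fixes d n m :: nat and g :: int and L :: "bspl set" and phi :: bspl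
  assumes "d \<ge> 1" and "n \<ge> 2" and "m \<ge> 2"
    and "g \<ge> 1"
    and "lineage d n m L"
    and "gap d n m (hgen d n m L) \<le> g"
    and "phi \<in> hgen d n m L"
  shows "\<exists>Lb. lineage d n m Lb \<and> L \<union> {phi} \<subseteq> Lb \<and> gap d n m (hgen d n m Lb) \<le> g
            \<and> (\<forall>Ls. lineage d n m Ls \<and> L \<union> {phi} \<subseteq> Ls \<and> gap d n m (hgen d n m Ls) \<le> g
                    \<longrightarrow> Lb \<subseteq> Ls)
            \<and> (\<forall>psi \<in> (Lb - L) - {phi}. \<exists>k::nat. 1 \<le> k \<and> int k \<le> int (lev phi) div g
                    \<and> psi \<in> Ovpow d n m k {phi} (- g) (allB d))"
proof -
  have n1: "n \<ge> 1" and m1: "m \<ge> 1" using assms(2,3) by auto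
  define H where "H = hgen d n m L"
  define gn where "gn = nat g"
  have g_eq: "g = int gn" using assms(4) by (simp add: gn_def)
  have linL: "finite L" "L \<subseteq> allB d" "L \<subseteq> B0 d m \<union> chBs n m L"
    using assms(5) by (auto simp: lineage_def)
  have Hfin: "finite H" unfolding H_def using hgen_finite linL(1) .
  have Hall: "H \<subseteq> allB d" unfolding H_def using hgen_allB linL(2) .
  have phiH: "phi \<in> H" using assms(7) H_def by simp
  have Hgap: "j \<le> gn" if "eta \<in> H" "psi \<in> H" "ov n m j eta psi" for eta psi j
  proof -
    have "int j \<le> gap d n m H" using gap_bound[OF Hfin Hall that] .
    thus "j \<le> gn" using assms(6) g_eq H_def by simp
  qed
  define T where "T = (\<Union>k. Ovpow d n m k {phi} (- int gn) H)"
  have TH: "T \<subseteq> H" unfolding T_def using Ovpow_sub[OF phiH] by blast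
  have phiT: "phi \<in> T" unfolding T_def by (metis UN_I UNIV_I Ovpow_0 singletonI)
  have Tclos: "psi \<in> T" if a: "chi \<in> T" "psi \<in> H" "ov n m gn chi psi" for chi psi
  proof -
    from a(1) obtain k where k: "chi \<in> Ovpow d n m k {phi} (- int gn) H" unfolding T_def by blast
    have "psi \<in> Ovpow d n m (Suc k) {phi} (- int gn) H"
      unfolding Ovpow_Suc Ov_iff using a k Hall by blast
    thus "psi \<in> T" unfolding T_def by blast
  qed
  define Lb where "Lb = L \<union> T"
  have Tfin: "finite T" using TH Hfin finite_subset by blast
  have linLb: "lineage d n m Lb"
    unfolding lineage_def Lb_def
  proof (intro conjI)
    show "finite (L \<union> T)" using linL(1) Tfin by simp
    show "L \<union> T \<subseteq> allB d" using linL(2) TH Hall by blast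
    have "chBs n m L \<subseteq> chBs n m (L \<union> T)" by (rule chBs_mono) blast
    moreover have "H \<subseteq> B0 d m \<union> chBs n m L" unfolding H_def hgen_def by blast
    ultimately show "L \<union> T \<subseteq> B0 d m \<union> chBs n m (L \<union> T)" using linL(3) TH by blast
  qed
  define Hb where "Hb = hgen d n m Lb"
  have Hb_cases: "x \<in> H \<or> (\<exists>chi\<in>T. x \<in> chB n m chi)" if x: "x \<in> Hb" for x
  proof -
    have x1: "x \<in> B0 d m \<union> chBs n m Lb" "x \<notin> Lb" using x unfolding Hb_def hgen_def by auto
    show ?thesis
    proof (cases "x \<in> B0 d m \<union> chBs n m L")
      case True thus ?thesis using x1(2) unfolding H_def hgen_def Lb_def by blast
    next
      case False
      then obtain chi where "chi \<in> Lb" "x \<in> chB n m chi" "chi \<notin> L"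
        using x1(1) unfolding chBs_def Lb_def by blast
      thus ?thesis unfolding Lb_def by blast
    qed
  qed
  have Hb_notLb: "x \<notin> Lb" if "x \<in> Hb" for x using that unfolding Hb_def hgen_def by blast
  have gapb: "gap d n m Hb \<le> g"
  proof (rule gap_le)
    show "finite Hb" unfolding Hb_def using hgen_finite linLb by (simp add: lineage_def)
    have "finite Lb" "Lb \<noteq> {}" using linLb phiT Lb_def by (auto simp: lineage_def)
    thus "Hb \<noteq> {}" unfolding Hb_def by (rule hgen_nonempty[OF n1])
    show "Hb \<subseteq> allB d" unfolding Hb_def using hgen_allB linLb by (simp add: lineage_def)
    show "m \<ge> 1" by (fact m1)
    show "0 \<le> g" using assms(4) by simp
    fix eta psi j assume e: "eta \<in> Hb" and p: "psi \<in> Hb" and o: "ov n m j eta psi"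
    have "j \<le> gn"
    proof (cases "eta \<in> H")
      case eH: True
      show ?thesis
      proof (cases "psi \<in> H")
        case True thus ?thesis using Hgap eH o by blast
      next
        case False
        then obtain chi' where c': "chi' \<in> T" "psi \<in> chB n m chi'" using Hb_cases[OF p] by blast
        have "ov n m (Suc j) eta chi'" by (rule ov_up[OF n1 o c'(2)])
        hence "Suc j \<le> gn" using Hgap eH c'(1) TH by blast
        thus ?thesis by simp
      qed
    next
      case False
      then obtain chi where c: "chi \<in> T" "eta \<in> chB n m chi" using Hb_cases[OF e] by blast
      show ?thesis
      proof (cases j)
        case 0 thus ?thesis by simp
      next
        case (Suc j0)
        have o0: "ov n m j0 chi psi" using ov_down[OF n1 _ c(2)] o Suc by blast
        show ?thesis
        proof (cases "psi \<in> H")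
          case True
          have "j0 \<le> gn" using Hgap c(1) TH True o0 by blast
          moreover have "j0 \<noteq> gn"
          proof
            assume "j0 = gn"
            hence "psi \<in> T" using Tclos c(1) True o0 by blast
            thus False using Hb_notLb[OF p] Lb_def by blast
          qed
          ultimately show ?thesis using Suc by simp
        next
          case False
          then obtain chi' where c': "chi' \<in> T" "psi \<in> chB n m chi'" using Hb_cases[OF p] by blast
          have "ov n m (Suc j0) chi chi'" by (rule ov_up[OF n1 o0 c'(2)])
          hence "Suc j0 \<le> gn" using Hgap c(1) c'(1) TH by blast
          thus ?thesis using Suc by simp
        qed
      qed
    qed
    thus "int j \<le> g" using g_eq by simp
  qed
  have least: "\<forall>Ls. lineage d n m Ls \<and> L \<union> {phi} \<subseteq> Ls \<and> gap d n m (hgen d n m Ls) \<le> g \<longrightarrow> Lb \<subseteq> Ls"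
  proof (intro allI impI)
    fix Ls assume a: "lineage d n m Ls \<and> L \<union> {phi} \<subseteq> Ls \<and> gap d n m (hgen d n m Ls) \<le> g"
    hence linLs: "lineage d n m Ls" and sub: "L \<union> {phi} \<subseteq> Ls"
      and gs: "gap d n m (hgen d n m Ls) \<le> g" by auto
    have finLs: "finite Ls" "Ls \<subseteq> allB d" using linLs by (auto simp: lineage_def)
    have Tk: "Ovpow d n m k {phi} (- int gn) H \<subseteq> Ls" for k
    proof (induction k)
      case 0 thus ?case using sub by (simp add: Ovpow_0)
    next
      case (Suc k)
      show ?case
      proof
        fix psi assume "psi \<in> Ovpow d n m (Suc k) {phi} (- int gn) H"
        then obtain chi where p: "psi \<in> allB d" "psi \<in> H"
          and c: "chi \<in> Ovpow d n m k {phi} (- int gn) H" and o: "ov n m gn chi psi"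
          unfolding Ovpow_Suc Ov_iff by blast
        show "psi \<in> Ls"
        proof (rule ccontr)
          assume np: "psi \<notin> Ls"
          have chiLs: "chi \<in> Ls" using Suc.IH c by blast
          obtain eta j' where e: "eta \<in> hgen d n m Ls" "j' > gn" "ov n m j' eta psi"
            using descend[OF linLs n1 m1 np refl chiLs o] by blast
          have "psi \<in> B0 d m \<union> chBs n m L" using p(2) unfolding H_def hgen_def by blast
          moreover have "chBs n m L \<subseteq> chBs n m Ls" using sub by (intro chBs_mono) blast
          ultimately have "psi \<in> hgen d n m Ls" using np unfolding hgen_def by blast
          hence "int j' \<le> gap d n m (hgen d n m Ls)"
            by (rule gap_bound[OF hgen_finite[OF finLs(1)] hgen_allB[OF finLs(2)] e(1) _ e(3)])
          thus False using gs e(2) g_eq by simp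
        qed
      qed
    qed
    have "T \<subseteq> Ls" unfolding T_def using Tk by (rule UN_least)
    thus "Lb \<subseteq> Ls" unfolding Lb_def using sub by blast
  qed
  have propk: "\<forall>psi \<in> (Lb - L) - {phi}. \<exists>k::nat. 1 \<le> k \<and> int k \<le> int (lev phi) div g
                    \<and> psi \<in> Ovpow d n m k {phi} (- g) (allB d)"
  proof
    fix psi assume "psi \<in> (Lb - L) - {phi}"
    then obtain k where k: "psi \<in> Ovpow d n m k {phi} (- int gn) H" and np: "psi \<noteq> phi"
      unfolding Lb_def T_def by blast
    have k1: "1 \<le> k" using k np by (cases k) (auto simp: Ovpow_0)
    have "lev phi = lev psi + k * gn" by (rule Ovpow_level[OF k])
    hence "int k * g \<le> int (lev phi)" using g_eq by simp
    hence "g * int k \<le> int (lev phi)" by (simp add: mult.commute)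
    hence kle: "int k \<le> int (lev phi) div g" using l2[of g "int k" "int (lev phi)"] assms(4) by simp
    have "psi \<in> Ovpow d n m k {phi} (- g) (allB d)" using Ovpow_mono[OF Hall] k g_eq by blast
    thus "\<exists>k::nat. 1 \<le> k \<and> int k \<le> int (lev phi) div g \<and> psi \<in> Ovpow d n m k {phi} (- g) (allB d)"
      using k1 kle by blast
  qed
  show ?thesis
  proof (intro exI[of _ Lb] conjI)
    show "lineage d n m Lb" by (fact linLb)
    show "L \<union> {phi} \<subseteq> Lb" using phiT unfolding Lb_def by blast
    show "gap d n m (hgen d n m Lb) \<le> g" using gapb unfolding Hb_def .
  qed (fact least, fact propk)
qed

end
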